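(* There is no positive function $u$ on $\mathbb{H}^3$ having exponential growth $e^{\rho/2}$ at infinity, i.e. satisfying $c\,e^{\rho(x,o)/2}\le u(x)\le C\,e^{\rho(x,o)/2}$ for all $x$ with $\rho(x,o)$ sufficiently large (for some point $o\in\mathbb{H}^3$ and constants $0<c\le C$), which solves the integral equation \[ u(x)=\int_{\mathbb{H}^3}G(x,y)\,u^{-7}(y)\,dV_y,\qquad x\in\mathbb{H}^3 . \]
   Context: $\mathbb{H}^3$ is 3-dimensional hyperbolic space with geodesic distance $\rho$, volume element $dV$ and Laplace–Beltrami operator $\Delta_{\mathbb{H}}$. $P_1=-\Delta_{\mathbb{H}}-\frac34$, $P_2=P_1(P_1+2)$ is the Paneitz operator, and $G(x,y)=P_2^{-1}(\rho(x,y))$ is its Green's function (fundamental solution), a positive function of $\rho(x,y)$ decaying like a constant times $e^{-\frac32\rho}$ as $\rho\to\infty$. *)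

theory Defs
  imports "HOL-Analysis.Analysis"
begin

text \<open>Upper half-space model of hyperbolic 3-space (curvature -1).
  A point is (x1, x2, x3) with x3 > 0.\<close>

type_synonym pt = "real \<times> real \<times> real"

definition hcoord :: "pt \<Rightarrow> real" where
  "hcoord p = snd (snd p)"

definition H3 :: "pt set" where
  "H3 = {p. hcoord p > 0}"

definition hdist :: "pt \<Rightarrow> pt \<Rightarrow> real" where
  "hdist p q = arcosh (1 + (norm (p - q))\<^sup>2 / (2 * hcoord p * hcoord q))"

definition hvol :: "pt measure" where
  "hvol = density (restrict_space lborel H3) (\<lambda>p. ennreal (1 / (hcoord p) ^ 3))"

text \<open>Green's function of the Paneitz operator P2 = P1 (P1 + 2), P1 = -Delta - 3/4, on H^3,
  as a function of the distance rho.  Since 1/(P1 (P1+2)) = (1/P1 - 1/(P1+2))/2 and the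
  Green's function of -Delta - 1 + k^2 on H^3 is exp(-k rho)/(4 pi sinh rho), one gets
  G = (exp(-rho/2) - exp(-3 rho/2)) / (8 pi sinh rho) = exp(-rho) / (8 pi cosh(rho/2)).\<close>
definition paneitz_green :: "real \<Rightarrow> real" where
  "paneitz_green r = exp (- r) / (8 * pi * cosh (r / 2))"

definition G :: "pt \<Rightarrow> pt \<Rightarrow> real" where
  "G x y = paneitz_green (hdist x y)"

end

theory Submission
  imports Defs "HOL-Probability.Sinc_Integral"
begin

lemma arcosh_meas[measurable]: "(arcosh :: real \<Rightarrow> real) \<in> borel_measurable borel"
  unfolding arcosh_def[abs_def] by measurable

lemma hcoord_meas[measurable]: "hcoord \<in> borel_measurable borel"
  unfolding hcoord_def[abs_def] by (intro borel_measurable_continuous_onI continuous_intros)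

lemma H3_sets[measurable]: "H3 \<in> sets borel"
proof -
  have "H3 = {p \<in> space borel. 0 < hcoord p}" by (simp add: H3_def)
  also have "\<dots> \<in> sets borel" by measurable
  finally show ?thesis .
qed

lemma hdist_meas[measurable]: "(\<lambda>y. hdist (f y) (g y)) \<in> borel_measurable M"
  if [measurable]: "f \<in> borel_measurable M" "g \<in> borel_measurable M" for f g :: "'a \<Rightarrow> pt"
  unfolding hdist_def by measurable

lemma cosh_meas[measurable]: "(cosh :: real \<Rightarrow> real) \<in> borel_measurable borel"
  by (intro borel_measurable_continuous_onI continuous_intros)

lemma G_meas[measurable]: "(\<lambda>y. G (f y) (g y)) \<in> borel_measurable M"
  if [measurable]: "f \<in> borel_measurable M" "g \<in> borel_measurable M" for f g :: "'a \<Rightarrow> pt"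
  unfolding G_def paneitz_green_def by measurable

lemma inv1: "(\<integral>\<^sup>+x. ennreal (inverse (1 + x^2)) \<partial>lborel) < \<infinity>"
proof -
  have "integrable lborel (\<lambda>x::real. inverse (1 + x^2))"
    using integrable_inverse_1_plus_square by (simp add: set_integrable_def)
  then show ?thesis by (simp add: integrable_iff_bounded)
qed

lemma aux_frac: "0 \<le> (s::real) \<Longrightarrow> 0 < k \<Longrightarrow> 0 < K \<Longrightarrow> 1 + s \<le> K * (s + k) \<Longrightarrow> 1 / (s + k) \<le> K / (1 + s)"
  by (simp add: divide_simps)

lemma meas_pair2:
  fixes f g :: "real \<Rightarrow> ennreal"
  assumes "f \<in> borel_measurable borel" "g \<in> borel_measurable borel"
  shows "(\<lambda>z::real \<times> real. f (fst z) * g (snd z)) \<in> borel_measurable borel"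
proof -
  have "(\<lambda>y::real\<times>real. f (fst y)) \<in> borel_measurable borel"
    by (rule measurable_compose[OF _ assms(1)]) (intro borel_measurable_continuous_onI continuous_intros)
  moreover have "(\<lambda>y::real\<times>real. g (snd y)) \<in> borel_measurable borel"
    by (rule measurable_compose[OF _ assms(2)]) (intro borel_measurable_continuous_onI continuous_intros)
  ultimately show ?thesis by (intro borel_measurable_times_ennreal)
qed

lemma oneD:
  fixes k q :: real assumes k: "k > 0"
  shows "(\<integral>\<^sup>+t. ennreal (1 / ((t - q)^2 + k)) \<partial>lborel) < \<infinity>"
proof -
  define K where "K = max 1 (1/k)"
  have Kpos: "K > 0" by (simp add: K_def)
  have le: "1 / ((t - q)^2 + k) \<le> K * inverse (1 + (t - q)^2)" for t
  proof -
    have a: "(t-q)^2 \<ge> 0" by simp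
    have "min 1 k * (1 + (t-q)^2) \<le> (t - q)^2 + k"
      using k a by (cases "k \<le> 1") (auto simp: min_def algebra_simps mult_left_le_one_le)
    moreover have "K * min 1 k = 1" using k by (auto simp: K_def min_def max_def field_simps)
    ultimately have "1 + (t-q)^2 \<le> K * ((t - q)^2 + k)"
      using mult_left_mono[of "min 1 k * (1 + (t-q)^2)" "(t - q)^2 + k" K] Kpos
      by (simp add: mult.assoc[symmetric])
    then show ?thesis using k a Kpos aux_frac[of "(t-q)^2" k K]
      by (simp add: divide_inverse)
  qed
  have "(\<integral>\<^sup>+t. ennreal (1 / ((t - q)^2 + k)) \<partial>lborel)
        \<le> (\<integral>\<^sup>+t. ennreal K * ennreal (inverse (1 + (t - q)^2)) \<partial>lborel)"
    by (intro nn_integral_mono) (use le Kpos in \<open>simp add: ennreal_mult[symmetric]\<close>)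
  also have "\<dots> = ennreal K * (\<integral>\<^sup>+t. ennreal (inverse (1 + (t - q)^2)) \<partial>lborel)"
    by (rule nn_integral_cmult) measurable
  also have "(\<integral>\<^sup>+t. ennreal (inverse (1 + (t - q)^2)) \<partial>lborel)
      = (\<integral>\<^sup>+t. ennreal (inverse (1 + t^2)) \<partial>lborel)"
    using nn_integral_real_affine[of "\<lambda>t. ennreal (inverse (1 + (t - q)^2))" 1 q] by simp
  finally show ?thesis using inv1
    by (simp add: ennreal_mult_less_top) (metis ennreal_less_top ennreal_mult_less_top le_less_trans)
qed

lemma prod3:
  fixes f1 f2 f3 :: "real \<Rightarrow> ennreal"
  assumes [measurable]: "f1 \<in> borel_measurable borel" "f2 \<in> borel_measurable borel" "f3 \<in> borel_measurable borel"
    and fin: "(\<integral>\<^sup>+t. f1 t \<partial>lborel) < \<infinity>" "(\<integral>\<^sup>+t. f2 t \<partial>lborel) < \<infinity>" "(\<integral>\<^sup>+t. f3 t \<partial>lborel) < \<infinity>"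
  shows "(\<integral>\<^sup>+y. f1 (fst y) * f2 (fst (snd y)) * f3 (snd (snd y)) \<partial>(lborel::pt measure)) < \<infinity>"
proof -
  have inner: "(\<integral>\<^sup>+z. f2 (fst z) * f3 (snd z) \<partial>(lborel :: (real \<times> real) measure))
      = (\<integral>\<^sup>+t. f2 t \<partial>lborel) * (\<integral>\<^sup>+t. f3 t \<partial>lborel)"
  proof -
    have "(\<integral>\<^sup>+z. f2 (fst z) * f3 (snd z) \<partial>(lborel :: (real \<times> real) measure))
       = (\<integral>\<^sup>+z. f2 (fst z) * f3 (snd z) \<partial>(lborel \<Otimes>\<^sub>M lborel :: (real \<times> real) measure))"
      by (simp add: lborel_prod)
    also have "\<dots> = (\<integral>\<^sup>+a. \<integral>\<^sup>+b. f2 a * f3 b \<partial>lborel \<partial>lborel)"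
    proof -
      have "(\<lambda>z. f2 (fst z) * f3 (snd z)) \<in> borel_measurable (lborel \<Otimes>\<^sub>M (lborel :: real measure))"
        unfolding lborel_prod using meas_pair2[OF assms(2,3)] by (simp only: measurable_lborel2)
      from lborel.nn_integral_fst[OF this] show ?thesis by simp
    qed
    also have "\<dots> = (\<integral>\<^sup>+a. f2 a * (\<integral>\<^sup>+b. f3 b \<partial>lborel) \<partial>lborel)"
      by (simp add: nn_integral_cmult)
    also have "\<dots> = (\<integral>\<^sup>+t. f2 t \<partial>lborel) * (\<integral>\<^sup>+t. f3 t \<partial>lborel)"
      by (simp add: nn_integral_multc)
    finally show ?thesis .
  qed
  have "(\<integral>\<^sup>+y. f1 (fst y) * f2 (fst (snd y)) * f3 (snd (snd y)) \<partial>(lborel::pt measure))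
     = (\<integral>\<^sup>+y. f1 (fst y) * (f2 (fst (snd y)) * f3 (snd (snd y))) \<partial>(lborel \<Otimes>\<^sub>M (lborel :: (real \<times> real) measure)))"
    by (simp add: lborel_prod mult.assoc)
  also have "\<dots> = (\<integral>\<^sup>+a. \<integral>\<^sup>+z. f1 a * (f2 (fst z) * f3 (snd z)) \<partial>lborel \<partial>lborel)"
  proof -
    have [measurable]: "(\<lambda>y::pt. f3 (snd (snd y))) \<in> borel_measurable borel"
      by (rule measurable_compose[OF _ assms(3)]) (intro borel_measurable_continuous_onI continuous_intros)
    have [measurable]: "(\<lambda>y::pt. f2 (fst (snd y))) \<in> borel_measurable borel"
      by (rule measurable_compose[OF _ assms(2)]) (intro borel_measurable_continuous_onI continuous_intros)
    have [measurable]: "(\<lambda>y::pt. f1 (fst y)) \<in> borel_measurable borel"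
      by (rule measurable_compose[OF _ assms(1)]) (intro borel_measurable_continuous_onI continuous_intros)
    have "(\<lambda>y::pt. f1 (fst y) * (f2 (fst (snd y)) * f3 (snd (snd y)))) \<in> borel_measurable borel"
      by (intro borel_measurable_times_ennreal) fact+
    then have meas: "(\<lambda>y. f1 (fst y) * (f2 (fst (snd y)) * f3 (snd (snd y)))) \<in> borel_measurable (lborel \<Otimes>\<^sub>M (lborel :: (real \<times> real) measure))"
      unfolding lborel_prod by (simp only: measurable_lborel2)
    show ?thesis using lborel.nn_integral_fst[OF meas] by simp
  qed
  also have "\<dots> = (\<integral>\<^sup>+a. f1 a * ((\<integral>\<^sup>+t. f2 t \<partial>lborel) * (\<integral>\<^sup>+t. f3 t \<partial>lborel)) \<partial>lborel)"
    using meas_pair2[OF assms(2,3)] by (subst nn_integral_cmult) (simp_all add: inner)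
  also have "\<dots> = (\<integral>\<^sup>+t. f1 t \<partial>lborel) * ((\<integral>\<^sup>+t. f2 t \<partial>lborel) * (\<integral>\<^sup>+t. f3 t \<partial>lborel))"
    by (simp add: nn_integral_multc)
  finally show ?thesis using fin by (simp add: ennreal_mult_less_top)
qed

lemma norm_pt_sq: "(norm (x::pt))^2 = (fst x)^2 + (fst (snd x))^2 + (snd (snd x))^2"
  by (cases x) (auto simp: norm_Pair)

lemma key_ineq:
  fixes a b t k :: real
  assumes a: "a \<ge> 0" and b: "b \<ge> 0" and t: "t > 0" and k: "k > 0"
  shows "1 / t^3 * (1 / (1 + (a + b + (t - k)^2) / (2 * t * k))^3)
     \<le> 8 * k^3 * (1 / (a + k^2) * (1 / (b + k^2)) * (1 / (t^2 + k^2)))"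
proof -
  define D where "D = a + b + t^2 + k^2"
  have "k^2 > 0" "t^2 \<ge> 0" using k by auto
  then have Dpos: "D > 0" using a b unfolding D_def by linarith
  have "1 + (a + b + (t - k)^2) / (2 * t * k) = D / (2 * t * k)"
    using t k by (simp add: D_def field_simps power2_eq_square)
  then have "1 / t^3 * (1 / (1 + (a + b + (t - k)^2) / (2 * t * k))^3) = 8 * k^3 / D^3"
    using t k Dpos by (simp add: field_simps power3_eq_cube)
  also have "\<dots> \<le> 8 * k^3 * (1 / (a + k^2) * (1 / (b + k^2)) * (1 / (t^2 + k^2)))"
  proof -
    have p1: "0 < a + k^2" "0 < b + k^2" "0 < t^2 + k^2" using a b k by (auto simp: add_nonneg_pos)
    have "(a + k^2) * (b + k^2) * (t^2 + k^2) \<le> D * D * D"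
      using p1 a b by (intro mult_mono) (auto simp: D_def)
    then have "1 / D^3 \<le> 1 / ((a + k^2) * (b + k^2) * (t^2 + k^2))"
      using p1 Dpos by (intro divide_left_mono) (auto simp: power3_eq_cube)
    then have "8 * k^3 * (1 / D^3) \<le> 8 * k^3 * (1 / ((a + k^2) * (b + k^2) * (t^2 + k^2)))"
      using k by (intro mult_left_mono) auto
    then show ?thesis by simp
  qed
  finally show ?thesis .
qed

lemma hfin:
  assumes p: "p \<in> H3"
  shows "(\<integral>\<^sup>+y. ennreal (1 / (1 + (norm (y - p))^2 / (2 * hcoord y * hcoord p))^3) \<partial>hvol) < \<infinity>"
proof -
  obtain q1 q2 k where pe: "p = (q1, q2, k)" by (cases p) auto
  have k: "k > 0" using p by (simp add: pe H3_def hcoord_def)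
  have k2: "k^2 > 0" using k by simp
  define F where "F y = ennreal (1 / (1 + (norm (y - p))^2 / (2 * hcoord y * hcoord p))^3)" for y
  define g1 where "g1 t = ennreal (1 / ((t - q1)^2 + k^2))" for t
  define g2 where "g2 t = ennreal (1 / ((t - q2)^2 + k^2))" for t
  define g3 where "g3 t = ennreal (1 / ((t - 0)^2 + k^2))" for t
  have [measurable]: "g1 \<in> borel_measurable borel" "g2 \<in> borel_measurable borel" "g3 \<in> borel_measurable borel"
    unfolding g1_def g2_def g3_def by measurable
  have dm: "(\<lambda>y. ennreal (1 / hcoord y ^ 3)) \<in> borel_measurable (restrict_space lborel H3)"
    by (intro measurable_restrict_space1) measurable
  have "(\<integral>\<^sup>+y. F y \<partial>hvol) = (\<integral>\<^sup>+y. ennreal (1 / hcoord y ^ 3) * F y \<partial>restrict_space lborel H3)"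
  proof -
    have "F \<in> borel_measurable (restrict_space lborel H3)"
      unfolding F_def[abs_def] by (intro measurable_restrict_space1) measurable
    then show ?thesis unfolding hvol_def by (rule nn_integral_density[OF dm])
  qed
  also have "\<dots> = (\<integral>\<^sup>+y. ennreal (1 / hcoord y ^ 3) * F y * indicator H3 y \<partial>lborel)"
    by (rule nn_integral_restrict_space) simp
  also have "\<dots> \<le> (\<integral>\<^sup>+y. ennreal (8 * k^3) * (g1 (fst y) * g2 (fst (snd y)) * g3 (snd (snd y))) \<partial>lborel)"
  proof (intro nn_integral_mono)
    fix y :: pt
    obtain y1 y2 t where ye: "y = (y1, y2, t)" by (cases y) auto
    show "ennreal (1 / hcoord y ^ 3) * F y * indicator H3 y
       \<le> ennreal (8 * k^3) * (g1 (fst y) * g2 (fst (snd y)) * g3 (snd (snd y)))"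
    proof (cases "y \<in> H3")
      case False then show ?thesis by simp
    next
      case True
      then have t: "t > 0" by (simp add: ye H3_def hcoord_def)
      have nrm: "(norm (y - p))^2 = (y1 - q1)^2 + (y2 - q2)^2 + (t - k)^2"
        using norm_pt_sq[of "y - p"] by (simp add: ye pe)
      have ki: "1 / t^3 * (1 / (1 + ((y1 - q1)^2 + (y2 - q2)^2 + (t - k)^2) / (2 * t * k))^3)
         \<le> 8 * k^3 * (1 / ((y1 - q1)^2 + k^2) * (1 / ((y2 - q2)^2 + k^2)) * (1 / (t^2 + k^2)))"
        by (rule key_ineq) (use t k in auto)
      have A1: "1 + ((y1 - q1)^2 + (y2 - q2)^2 + (t - k)^2) / (2 * t * k) \<ge> 0"
        using t k by (intro add_nonneg_nonneg divide_nonneg_nonneg) auto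
      have lhs: "ennreal (1 / hcoord y ^ 3) * F y * indicator H3 y
          = ennreal (1 / t^3 * (1 / (1 + ((y1 - q1)^2 + (y2 - q2)^2 + (t - k)^2) / (2 * t * k))^3))"
        unfolding F_def nrm using True t A1 by (simp add: ye pe hcoord_def ennreal_mult[symmetric])
      have rhs: "ennreal (8 * k^3) * (g1 (fst y) * g2 (fst (snd y)) * g3 (snd (snd y)))
          = ennreal (8 * k^3 * (1 / ((y1 - q1)^2 + k^2) * (1 / ((y2 - q2)^2 + k^2)) * (1 / (t^2 + k^2))))"
        using k by (simp add: g1_def g2_def g3_def ye ennreal_mult[symmetric] add_nonneg_pos)
      show ?thesis unfolding lhs rhs by (rule ennreal_leI[OF ki])
    qed
  qed
  also have "\<dots> = ennreal (8 * k^3) * (\<integral>\<^sup>+y. g1 (fst y) * g2 (fst (snd y)) * g3 (snd (snd y)) \<partial>(lborel::pt measure))"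
  proof (rule nn_integral_cmult)
    have [measurable]: "(\<lambda>y::pt. g3 (snd (snd y))) \<in> borel_measurable borel"
      by (rule measurable_compose[of _ _ borel]) (auto intro!: borel_measurable_continuous_onI continuous_intros)
    have [measurable]: "(\<lambda>y::pt. g2 (fst (snd y))) \<in> borel_measurable borel"
      by (rule measurable_compose[of _ _ borel]) (auto intro!: borel_measurable_continuous_onI continuous_intros)
    have [measurable]: "(\<lambda>y::pt. g1 (fst y)) \<in> borel_measurable borel"
      by (rule measurable_compose[of _ _ borel]) (auto intro!: borel_measurable_continuous_onI continuous_intros)
    have "(\<lambda>y::pt. g1 (fst y) * g2 (fst (snd y)) * g3 (snd (snd y))) \<in> borel_measurable borel"
      by (intro borel_measurable_times_ennreal) fact+
    then show "(\<lambda>y::pt. g1 (fst y) * g2 (fst (snd y)) * g3 (snd (snd y))) \<in> borel_measurable lborel"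
      by simp
  qed
  also have "\<dots> < \<infinity>"
  proof -
    have "(\<integral>\<^sup>+y. g1 (fst y) * g2 (fst (snd y)) * g3 (snd (snd y)) \<partial>(lborel::pt measure)) < \<infinity>"
      by (rule prod3) (use oneD[OF k2] oneD[OF k2, of 0] in \<open>simp_all add: g1_def g2_def g3_def\<close>)
    then show ?thesis by (simp add: ennreal_mult_less_top)
  qed
  finally show ?thesis unfolding F_def .
qed

lemma pg_pos: "0 < paneitz_green r"
  unfolding paneitz_green_def by (simp add: pi_gt_zero)

lemma pg_le: assumes "0 \<le> r" shows "paneitz_green r \<le> 1 / (8 * pi)"
proof -
  have "exp (- r) \<le> 1" using assms by simp
  moreover have "1 \<le> cosh (r / 2)" by (rule cosh_real_ge_1)
  ultimately have "exp (- r) \<le> cosh (r / 2)" by linarith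
  then have "exp (- r) / cosh (r / 2) \<le> 1" by simp
  then show ?thesis unfolding paneitz_green_def using pi_gt_zero
    by (simp add: divide_simps)
qed

lemma pg_mono: assumes "0 \<le> r" "r \<le> s" shows "paneitz_green s \<le> paneitz_green r"
proof -
  have "exp (- s) \<le> exp (- r)" using assms by simp
  moreover have "cosh (r / 2) \<le> cosh (s / 2)" using assms by (simp add: cosh_real_nonneg_le_iff)
  ultimately have "exp (- s) / cosh (s / 2) \<le> exp (- r) / cosh (r / 2)"
    by (intro frac_le) auto
  then show ?thesis unfolding paneitz_green_def using pi_gt_zero
    by (simp add: divide_simps)
qed

lemma hdist_arg_ge1: "x \<in> H3 \<Longrightarrow> y \<in> H3 \<Longrightarrow> 1 \<le> 1 + (norm (x - y))^2 / (2 * hcoord x * hcoord y)"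
  by (simp add: H3_def)

lemma hdist_nonneg: "x \<in> H3 \<Longrightarrow> y \<in> H3 \<Longrightarrow> 0 \<le> hdist x y"
  unfolding hdist_def using hdist_arg_ge1 by simp

lemma hdist_sym: "hdist x y = hdist y x"
  unfolding hdist_def by (simp add: norm_minus_commute mult_ac)

lemma cosh_le_exp: "0 \<le> (r::real) \<Longrightarrow> cosh r \<le> exp r"
  unfolding cosh_field_def
proof -
  assume "0 \<le> r"
  then have "exp (- r) \<le> exp r" by simp
  then show "(exp r + exp (- r)) / 2 \<le> exp r" by simp
qed

lemma meas_hvol: "f \<in> borel_measurable (borel :: pt measure) \<Longrightarrow> f \<in> borel_measurable hvol"
  unfolding hvol_def by (simp add: measurable_restrict_space1)

theorem mainTheorem5:
  fixes u :: "pt \<Rightarrow> real"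
  assumes meas: "u \<in> borel_measurable hvol"
    and pos: "\<And>x. x \<in> H3 \<Longrightarrow> u x > 0"
    and growth: "\<exists>p0\<in>H3. \<exists>c C R. 0 < c \<and> c \<le> C \<and>
        (\<forall>x\<in>H3. hdist x p0 \<ge> R \<longrightarrow>
           c * exp (hdist x p0 / 2) \<le> u x \<and> u x \<le> C * exp (hdist x p0 / 2))"
    and eq: "\<And>x. x \<in> H3 \<Longrightarrow>
        ennreal (u x) = (\<integral>\<^sup>+ y. ennreal (G x y * (1 / (u y) ^ 7)) \<partial>hvol)"
  shows False
proof -
  obtain p0 c C R where p0: "p0 \<in> H3" and c: "0 < c"
    and gr: "\<And>x. x \<in> H3 \<Longrightarrow> hdist x p0 \<ge> R \<Longrightarrow> c * exp (hdist x p0 / 2) \<le> u x"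
    using growth by blast
  define A where "A y = 1 + (norm (y - p0))^2 / (2 * hcoord y * hcoord p0)" for y
  have A1: "y \<in> H3 \<Longrightarrow> 1 \<le> A y" for y unfolding A_def using hdist_arg_ge1[OF _ p0] by simp
  have hdA: "hdist y p0 = arcosh (A y)" for y unfolding hdist_def A_def ..
  have coshA: "y \<in> H3 \<Longrightarrow> cosh (hdist y p0) = A y" for y using A1 hdA by simp
  define g0 where "g0 = paneitz_green (max R 0)"
  have g0: "g0 > 0" unfolding g0_def by (rule pg_pos)
  define K2 where "K2 = 1 / (8 * pi * g0)"
  define K1 where "K1 = 1 / (8 * pi * c^7)"
  have K2: "K2 > 0" unfolding K2_def using g0 pi_gt_zero by simp
  have K1: "K1 > 0" unfolding K1_def using c pi_gt_zero by simp
  have pw: "G x y * (1 / (u y)^7) \<le> K2 * (G p0 y * (1 / (u y)^7)) + K1 * (1 / (A y)^3)"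
    if x: "x \<in> H3" and y: "y \<in> H3" for x y
  proof -
    define r where "r = hdist y p0"
    have r0: "0 \<le> r" unfolding r_def by (rule hdist_nonneg[OF y p0])
    have uy: "u y > 0" using pos[OF y] .
    have w0: "0 \<le> 1 / (u y)^7" using uy by simp
    have Gx: "G x y \<le> 1 / (8 * pi)" unfolding G_def by (rule pg_le[OF hdist_nonneg[OF x y]])
    have Gp: "G p0 y = paneitz_green r" unfolding G_def r_def by (simp add: hdist_sym)
    have Gp0: "0 \<le> G p0 y" unfolding Gp using pg_pos[of r] by simp
    have Ay: "A y \<ge> 1" using A1[OF y] .
    show ?thesis
    proof (cases "r < R")
      case True
      have "g0 \<le> G p0 y" unfolding Gp g0_def using True r0 by (intro pg_mono) auto
      then have "1 / (8 * pi) \<le> K2 * G p0 y" unfolding K2_def using g0 pi_gt_zero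
        by (simp add: divide_simps)
      with Gx have "G x y \<le> K2 * G p0 y" by linarith
      then have "G x y * (1 / (u y)^7) \<le> K2 * G p0 y * (1 / (u y)^7)"
        using w0 by (rule mult_right_mono)
      moreover have "0 \<le> K1 * (1 / (A y)^3)" using K1 Ay by simp
      ultimately show ?thesis by (simp add: mult.assoc)
    next
      case False
      then have ul: "c * exp (r / 2) \<le> u y" using gr[OF y] unfolding r_def by simp
      have cpos: "0 < c * exp (r / 2)" using c by simp
      have "A y ^ 3 \<le> exp r ^ 3"
        using coshA[OF y] cosh_le_exp[OF r0] Ay unfolding r_def by (intro power_mono) auto
      also have "exp r ^ 3 = exp (3 * r)" by (simp add: exp_of_nat_mult[symmetric])
      also have "\<dots> \<le> exp (7 * r / 2)" using r0 by simp
      also have "\<dots> = exp (r / 2) ^ 7" by (simp add: exp_of_nat_mult[symmetric])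
      finally have Aexp: "A y ^ 3 \<le> exp (r / 2) ^ 7" .
      have "(c * exp (r / 2))^7 \<le> (u y)^7" using ul cpos by (intro power_mono) auto
      then have "1 / (u y)^7 \<le> 1 / (c * exp (r / 2))^7"
        using cpos uy by (intro divide_left_mono) auto
      also have "\<dots> = 1 / c^7 * (1 / exp (r / 2) ^ 7)" by (simp add: power_mult_distrib)
      also have "\<dots> \<le> 1 / c^7 * (1 / (A y)^3)"
        using Aexp Ay c by (intro mult_left_mono divide_left_mono) auto
      finally have wb: "1 / (u y)^7 \<le> 1 / c^7 * (1 / (A y)^3)" .
      have "G x y * (1 / (u y)^7) \<le> 1 / (8 * pi) * (1 / c^7 * (1 / (A y)^3))"
        using Gx wb w0 G_def pg_pos by (intro mult_mono) (auto simp: less_imp_le)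
      also have "\<dots> = K1 * (1 / (A y)^3)" unfolding K1_def by simp
      finally show ?thesis using K2 Gp0 w0 by (smt (verit) mult_nonneg_nonneg)
    qed
  qed
  have sp: "space hvol = H3" unfolding hvol_def by (simp add: space_restrict_space)
  have mG[measurable]: "(\<lambda>y. G p0 y) \<in> borel_measurable (borel :: pt measure)" by measurable
  have mu: "(\<lambda>y. ennreal (K2 * (G p0 y * (1 / (u y)^7)))) \<in> borel_measurable hvol"
    using meas_hvol[OF mG] meas by measurable
  have mA: "(\<lambda>y. ennreal (K1 * (1 / (A y)^3))) \<in> borel_measurable hvol"
    by (rule meas_hvol) (unfold A_def, measurable)
  obtain I where I: "(\<integral>\<^sup>+y. ennreal (1 / (A y)^3) \<partial>hvol) = ennreal I" and I0: "0 \<le> I"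
  proof -
    have "(\<integral>\<^sup>+y. ennreal (1 / (A y)^3) \<partial>hvol) < top"
      using hfin[OF p0] unfolding A_def by simp
    then show ?thesis using that unfolding less_top_ennreal by blast
  qed
  define M where "M = K2 * u p0 + K1 * I"
  have M0: "0 \<le> M" unfolding M_def using K1 K2 I0 pos[OF p0] by simp
  have bound: "u x \<le> M" if x: "x \<in> H3" for x
  proof -
    have "ennreal (u x) = (\<integral>\<^sup>+ y. ennreal (G x y * (1 / (u y) ^ 7)) \<partial>hvol)" using eq[OF x] .
    also have "\<dots> \<le> (\<integral>\<^sup>+ y. ennreal (K2 * (G p0 y * (1 / (u y)^7))) + ennreal (K1 * (1 / (A y)^3)) \<partial>hvol)"
    proof (rule nn_integral_mono)
      fix y assume "y \<in> space hvol"
      then have y: "y \<in> H3" using sp by simp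
      have n1: "0 \<le> G p0 y * (1 / (u y)^7)" using pg_pos pos[OF y] unfolding G_def by (simp add: less_imp_le)
      have n2: "0 \<le> 1 / (A y)^3" using A1[OF y] by simp
      show "ennreal (G x y * (1 / (u y) ^ 7)) \<le> ennreal (K2 * (G p0 y * (1 / (u y)^7))) + ennreal (K1 * (1 / (A y)^3))"
      proof -
        note nn = n1 n2
        have a: "0 \<le> K2 * (G p0 y * (1 / (u y)^7))" by (rule mult_nonneg_nonneg[OF _ n1]) (use K2 in simp)
        have b: "0 \<le> K1 * (1 / (A y)^3)" by (rule mult_nonneg_nonneg[OF _ n2]) (use K1 in simp)
        have "ennreal (G x y * (1 / (u y) ^ 7)) \<le> ennreal (K2 * (G p0 y * (1 / (u y)^7)) + K1 * (1 / (A y)^3))"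
          by (rule ennreal_leI[OF pw[OF x y]])
        also have "\<dots> = ennreal (K2 * (G p0 y * (1 / (u y)^7))) + ennreal (K1 * (1 / (A y)^3))"
          by (rule ennreal_plus[OF a b])
        finally show ?thesis .
      qed
    qed
    also have "\<dots> = (\<integral>\<^sup>+ y. ennreal (K2 * (G p0 y * (1 / (u y)^7))) \<partial>hvol) + (\<integral>\<^sup>+ y. ennreal (K1 * (1 / (A y)^3)) \<partial>hvol)"
      by (rule nn_integral_add[OF mu mA])
    also have "(\<integral>\<^sup>+ y. ennreal (K2 * (G p0 y * (1 / (u y)^7))) \<partial>hvol) = ennreal K2 * ennreal (u p0)"
    proof -
      have "(\<integral>\<^sup>+ y. ennreal (K2 * (G p0 y * (1 / (u y)^7))) \<partial>hvol)
          = (\<integral>\<^sup>+ y. ennreal K2 * ennreal (G p0 y * (1 / (u y)^7)) \<partial>hvol)"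
        by (intro nn_integral_cong) (rule ennreal_mult'[OF less_imp_le[OF K2]])
      also have "\<dots> = ennreal K2 * (\<integral>\<^sup>+ y. ennreal (G p0 y * (1 / (u y)^7)) \<partial>hvol)"
      proof (rule nn_integral_cmult)
        show "(\<lambda>y. ennreal (G p0 y * (1 / (u y)^7))) \<in> borel_measurable hvol"
          using meas_hvol[OF mG] meas by measurable
      qed
      also have "\<dots> = ennreal K2 * ennreal (u p0)" using eq[OF p0] by simp
      finally show ?thesis .
    qed
    also have "(\<integral>\<^sup>+ y. ennreal (K1 * (1 / (A y)^3)) \<partial>hvol) = ennreal K1 * ennreal I"
    proof -
      have "(\<integral>\<^sup>+ y. ennreal (K1 * (1 / (A y)^3)) \<partial>hvol)
          = (\<integral>\<^sup>+ y. ennreal K1 * ennreal (1 / (A y)^3) \<partial>hvol)"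
        by (intro nn_integral_cong) (rule ennreal_mult'[OF less_imp_le[OF K1]])
      also have "\<dots> = ennreal K1 * (\<integral>\<^sup>+ y. ennreal (1 / (A y)^3) \<partial>hvol)"
        by (intro nn_integral_cmult meas_hvol) (unfold A_def, measurable)
      finally show ?thesis using I by simp
    qed
    also have "ennreal K2 * ennreal (u p0) + ennreal K1 * ennreal I = ennreal M"
      unfolding M_def using K1 K2 I0 pos[OF p0] by (simp add: ennreal_mult ennreal_plus)
    finally show ?thesis using M0 by simp
  qed
  obtain q1 q2 k where pe: "p0 = (q1, q2, k)" by (cases p0) auto
  have k: "k > 0" using p0 by (simp add: pe H3_def hcoord_def)
  define N where "N = max (cosh R) ((M / c)^2 + 1)"
  define s where "s = max k (4 * k * N)"
  have s: "s \<ge> k" "s \<ge> 4 * k * N" unfolding s_def by auto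
  have spos: "s > 0" using s k by linarith
  define x where "x = (q1, q2, k + s)"
  have x: "x \<in> H3" unfolding x_def H3_def hcoord_def using k spos by simp
  have Ax: "A x = 1 + s^2 / (2 * (k + s) * k)"
    unfolding A_def x_def pe hcoord_def using norm_pt_sq[of "(0, 0, s)"] by simp
  have "s / (4 * k) \<le> s^2 / (2 * (k + s) * k)"
    using s k spos by (simp add: divide_simps power2_eq_square)
  moreover have "N \<le> s / (4 * k)" using s k by (simp add: divide_simps mult_ac)
  ultimately have AN: "N \<le> A x" using Ax
    by (smt (verit) divide_nonneg_nonneg k power2_eq_square spos zero_le_mult_iff)
  define r where "r = hdist x p0"
  have r0: "0 \<le> r" unfolding r_def by (rule hdist_nonneg[OF x p0])
  have cr: "cosh r = A x" unfolding r_def by (rule coshA[OF x])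
  have rR: "R \<le> r"
  proof (cases "R \<le> 0")
    case True then show ?thesis using r0 by linarith
  next
    case False
    have "cosh R \<le> cosh r" using cr AN unfolding N_def by simp
    then show ?thesis using False r0 cosh_real_nonneg_le_iff[of R r] by simp
  qed
  have "(M / c)^2 < A x" using AN unfolding N_def by simp
  also have "\<dots> \<le> exp r" using cr cosh_le_exp[OF r0] by simp
  also have "exp r = (exp (r / 2))^2" by (simp add: exp_of_nat_mult[symmetric])
  finally have "M / c < exp (r / 2)"
    using power_less_imp_less_base[of "M / c" 2 "exp (r / 2)"] by simp
  then have "M < c * exp (r / 2)" using c by (simp add: divide_simps mult.commute)
  also have "\<dots> \<le> u x" using gr[OF x] rR unfolding r_def by simp
  also have "\<dots> \<le> M" by (rule bound[OF x])
  finally show False by simp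
qed

end
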